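(* Let $g\colon\mathbb X\to\mathbb Y$ be continuously differentiable, $D\subset\mathbb Y$ closed, $\Phi(x):=g(x)-D$, $(\bar x,0)\in\operatorname{gph}\Phi$, $u\in\mathbb S_{\mathbb X}$, and let $\{e_1,\dots,e_m\}$ be an orthonormal basis of $\mathbb Y$. Then $\Phi$ is quasi-normal in direction $u$ at $(\bar x,0)$ w.r.t. $\{e_1,\dots,e_m\}$ if and only if there does not exist a nonzero $\lambda\in\mathcal N_D(g(\bar x);\nabla g(\bar x)u)$ with $\nabla g(\bar x)^*\lambda=0$ for which there are sequences $\{x_k\}\subset\mathbb X$ with $x_k\ne\bar x$, $\{z_k\}\subset D$, $\{\lambda_k\}\subset\mathbb Y$ with $x_k\to\bar x$, $z_k\to g(\bar x)$, $\lambda_k\to\lambda$, $(x_k-\bar x)/\|x_k-\bar x\|\to u$, $(z_k-g(\bar x))/\|x_k-\bar x\|\to\nabla g(\bar x)u$, and, for all $k$ and $i$, $\lambda_k\in\widehat{\mathcal N}_D(z_k)$ and $\langle\lambda,e_i\rangle\langle g(x_k)-z_k,e_i\rangle>0$ whenever $\langle\lambda,e_i\rangle\ne0$.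
   Context: $\nabla g(\bar x)$ is the derivative (linear map), $\nabla g(\bar x)^*$ its adjoint. $\widehat{\mathcal N}_D$ regular normal cone, $\mathcal N_D(y;v)$ directional limiting normal cone (all limits of $\eta_k\in\widehat{\mathcal N}_D(y+t_kv_k)$ with $v_k\to v$, $t_k\searrow0$). Quasi-normality in direction $u$ at $(\bar x,\bar y)$ w.r.t. $\{e_i\}$: there is no nonzero $\lambda$ with $0\in D^*\Phi((\bar x,\bar y);(u,0))(\lambda)$ (directional limiting coderivative, i.e. $(0,-\lambda)\in\mathcal N_{\operatorname{gph}\Phi}((\bar x,\bar y);(u,0))$) for which there exist $\{(x_k,y_k)\}\subset\operatorname{gph}\Phi$ with $x_k\ne\bar x$, $\{\lambda_k\}\subset\mathbb Y$, $\{\eta_k\}\subset\mathbb X$ with $x_k\to\bar x$, $y_k\to\bar y$, $\lambda_k\to\lambda$, $\eta_k\to0$, $(x_k-\bar x)/\|x_k-\bar x\|\to u$, $(y_k-\bar y)/\|x_k-\bar x\|\to0$, $\eta_k\in\widehat D^*\Phi(x_k,y_k)(\lambda_k)$ (regular coderivative), and $\langle\lambda,e_i\rangle\langle y_k-\bar y,e_i\rangle>0$ whenever $\langle\lambda,e_i\rangle\ne0$. *)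

theory Defs
  imports "HOL-Analysis.Analysis"
begin

definition rnormal :: "'a::real_inner set \<Rightarrow> 'a \<Rightarrow> 'a set" where
  "rnormal D y = {v. y \<in> D \<and>
     (\<forall>\<epsilon>>0. \<exists>\<delta>>0. \<forall>y'\<in>D. norm (y' - y) < \<delta> \<longrightarrow> inner v (y' - y) \<le> \<epsilon> * norm (y' - y))}"

definition dlnormal :: "'a::real_inner set \<Rightarrow> 'a \<Rightarrow> 'a \<Rightarrow> 'a set" where
  "dlnormal D y v = {\<eta>. \<exists>(t::nat \<Rightarrow> real) vs \<eta>s.
      (\<forall>k. t k > 0) \<and> t \<longlonglongrightarrow> 0 \<and> vs \<longlonglongrightarrow> v \<and> \<eta>s \<longlonglongrightarrow> \<eta> \<and>
      (\<forall>k. \<eta>s k \<in> rnormal D (y + t k *\<^sub>R vs k))}"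

definition gph :: "('a \<Rightarrow> 'b set) \<Rightarrow> ('a \<times> 'b) set" where
  "gph \<Phi> = {(x, y). y \<in> \<Phi> x}"

definition rcoderiv :: "('a::real_inner \<Rightarrow> 'b::real_inner set) \<Rightarrow> 'a \<Rightarrow> 'b \<Rightarrow> 'b \<Rightarrow> 'a set" where
  "rcoderiv \<Phi> x y lam = {\<eta>. (\<eta>, - lam) \<in> rnormal (gph \<Phi>) (x, y)}"

definition dlcoderiv :: "('a::real_inner \<Rightarrow> 'b::real_inner set) \<Rightarrow> 'a \<Rightarrow> 'b \<Rightarrow> 'a \<Rightarrow> 'b \<Rightarrow> 'b \<Rightarrow> 'a set" where
  "dlcoderiv \<Phi> x y u v lam = {\<eta>. (\<eta>, - lam) \<in> dlnormal (gph \<Phi>) (x, y) (u, v)}"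

definition quasi_normal_dir ::
  "('a::real_inner \<Rightarrow> 'b::real_inner set) \<Rightarrow> 'a \<Rightarrow> 'b \<Rightarrow> 'a \<Rightarrow> (nat \<Rightarrow> 'b) \<Rightarrow> nat \<Rightarrow> bool" where
  "quasi_normal_dir \<Phi> xb yb u e m \<longleftrightarrow>
    \<not> (\<exists>lam. lam \<noteq> 0 \<and> 0 \<in> dlcoderiv \<Phi> xb yb u 0 lam \<and>
        (\<exists>xs ys lams \<eta>s.
           (\<forall>k. (xs k, ys k) \<in> gph \<Phi> \<and> xs k \<noteq> xb) \<and>
           xs \<longlonglongrightarrow> xb \<and> ys \<longlonglongrightarrow> yb \<and> lams \<longlonglongrightarrow> lam \<and> \<eta>s \<longlonglongrightarrow> 0 \<and>
           (\<lambda>k. (1 / norm (xs k - xb)) *\<^sub>R (xs k - xb)) \<longlonglongrightarrow> u \<and>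
           (\<lambda>k. (1 / norm (xs k - xb)) *\<^sub>R (ys k - yb)) \<longlonglongrightarrow> 0 \<and>
           (\<forall>k. \<eta>s k \<in> rcoderiv \<Phi> (xs k) (ys k) (lams k)) \<and>
           (\<forall>k. \<forall>i<m. inner lam (e i) \<noteq> 0 \<longrightarrow> inner lam (e i) * inner (ys k - yb) (e i) > 0)))"

end

theory Submission
  imports Defs
begin

lemma adjoint_sum:
  fixes f :: "'n::euclidean_space \<Rightarrow> 'm::euclidean_space"
  assumes "linear f"
  shows "adjoint f y = (\<Sum>b\<in>Basis. inner (f b) y *\<^sub>R b)"
proof -
  have "adjoint f y = (\<Sum>b\<in>Basis. inner (adjoint f y) b *\<^sub>R b)"
    by (simp add: euclidean_representation)
  also have "\<dots> = (\<Sum>b\<in>Basis. inner (f b) y *\<^sub>R b)"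
    using adjoint_works[OF assms] by (simp add: inner_commute)
  finally show ?thesis .
qed

lemma adjoint_tendsto:
  fixes g' :: "'a::euclidean_space \<Rightarrow> 'a \<Rightarrow>\<^sub>L 'b::euclidean_space"
  assumes cont: "continuous_on UNIV g'" and xs: "xs \<longlonglongrightarrow> x" and ls: "ls \<longlonglongrightarrow> l"
  shows "(\<lambda>k. adjoint (blinfun_apply (g' (xs k))) (ls k)) \<longlonglongrightarrow> adjoint (blinfun_apply (g' x)) l"
proof -
  have g: "(\<lambda>k. g' (xs k)) \<longlonglongrightarrow> g' x"
    using cont xs by (metis UNIV_I continuous_on_eq_continuous_at isCont_tendsto_compose open_UNIV)
  have "(\<lambda>k. (\<Sum>b\<in>Basis. inner (blinfun_apply (g' (xs k)) b) (ls k) *\<^sub>R b)) \<longlonglongrightarrow> (\<Sum>b\<in>Basis. inner (blinfun_apply (g' x) b) l *\<^sub>R b)"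
    by (intro tendsto_intros blinfun.tendsto g ls)
  then show ?thesis
    by (simp add: adjoint_sum blinfun.bounded_linear_right bounded_linear.linear)
qed

lemma dir_quot:
  fixes g :: "'a::real_normed_vector \<Rightarrow> 'b::real_normed_vector"
  assumes d: "(g has_derivative G) (at x)" and t: "t \<longlonglongrightarrow> 0" and tp: "\<And>k. t k > 0"
    and us: "us \<longlonglongrightarrow> u"
  shows "(\<lambda>k. (1 / t k) *\<^sub>R (g (x + t k *\<^sub>R us k) - g x)) \<longlonglongrightarrow> G u"
proof -
  define \<rho> where "\<rho> h = norm (g (x + h) - g x - G h) / norm h" for h
  have bl: "bounded_linear G" and lim: "\<rho> \<midarrow>0\<rightarrow> 0"
    using d unfolding has_derivative_at \<rho>_def by auto
  have "isCont \<rho> 0" using lim by (simp add: isCont_def \<rho>_def)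
  moreover have "(\<lambda>k. t k *\<^sub>R us k) \<longlonglongrightarrow> 0"
    using tendsto_scaleR[OF t us] by simp
  ultimately have r: "(\<lambda>k. \<rho> (t k *\<^sub>R us k)) \<longlonglongrightarrow> 0"
    using isCont_tendsto_compose by (fastforce simp: \<rho>_def)
  have eq: "norm ((1 / t k) *\<^sub>R (g (x + t k *\<^sub>R us k) - g x) - G (us k)) = norm (us k) * \<rho> (t k *\<^sub>R us k)" for k
  proof -
    have tk: "t k > 0" by (rule tp)
    have "(1 / t k) *\<^sub>R (g (x + t k *\<^sub>R us k) - g x) - G (us k)
        = (1 / t k) *\<^sub>R (g (x + t k *\<^sub>R us k) - g x - G (t k *\<^sub>R us k))"
      using tk by (simp add: linear_cmul[OF bounded_linear.linear[OF bl]] scaleR_diff_right)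
    then have n1: "norm ((1 / t k) *\<^sub>R (g (x + t k *\<^sub>R us k) - g x) - G (us k))
        = norm (g (x + t k *\<^sub>R us k) - g x - G (t k *\<^sub>R us k)) / t k"
      using tk by simp
    show ?thesis
    proof (cases "us k = 0")
      case True
      then show ?thesis using linear_0[OF bounded_linear.linear[OF bl]] by (simp add: \<rho>_def)
    next
      case False
      then show ?thesis unfolding n1 using tk by (simp add: \<rho>_def field_simps)
    qed
  qed
  have "(\<lambda>k. norm (us k) * \<rho> (t k *\<^sub>R us k)) \<longlonglongrightarrow> norm u * 0"
    by (intro tendsto_intros us r)
  then have "(\<lambda>k. norm ((1 / t k) *\<^sub>R (g (x + t k *\<^sub>R us k) - g x) - G (us k))) \<longlonglongrightarrow> 0"
    by (simp add: eq)
  then have "(\<lambda>k. (1 / t k) *\<^sub>R (g (x + t k *\<^sub>R us k) - g x) - G (us k)) \<longlonglongrightarrow> 0"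
    by (simp add: tendsto_norm_zero_iff)
  moreover have "(\<lambda>k. G (us k)) \<longlonglongrightarrow> G u"
    using bounded_linear.tendsto[OF bl us] .
  ultimately show ?thesis using tendsto_add by fastforce
qed


lemma gph_iff:
  fixes g :: "'a \<Rightarrow> 'b::ab_group_add"
  assumes Phi_def: "\<And>x. \<Phi> x = (\<lambda>d. g x - d) ` D"
  shows "(x, y) \<in> gph \<Phi> \<longleftrightarrow> g x - y \<in> D"
proof
  assume "(x, y) \<in> gph \<Phi>"
  then obtain d where "d \<in> D" "y = g x - d" by (auto simp: gph_def Phi_def)
  then show "g x - y \<in> D" by (simp add: diff_diff_eq2)
next
  assume "g x - y \<in> D"
  then show "(x, y) \<in> gph \<Phi>" unfolding gph_def Phi_def
    by (auto intro!: image_eqI[where x="g x - y"])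
qed

lemma rnormal_gph_bwd:
  fixes g :: "'a::euclidean_space \<Rightarrow> 'b::euclidean_space"
  assumes deriv: "(g has_derivative blinfun_apply (g' x)) (at x)"
   and Phi_def: "\<And>x. \<Phi> x = (\<lambda>d. g x - d) ` D"
   and l: "l \<in> rnormal D (g x - y)"
  shows "(adjoint (blinfun_apply (g' x)) l, -l) \<in> rnormal (gph \<Phi>) (x,y)"
proof -
  define G where "G = blinfun_apply (g' x)"
  define B where "B = norm (g' x)"
  define z where "z = g x - y"
  have B0: "B \<ge> 0" by (simp add: B_def)
  have lin: "linear G" unfolding G_def by (simp add: blinfun.bounded_linear_right bounded_linear.linear)
  have zD: "z \<in> D" using l by (simp add: rnormal_def z_def)
  have lz: "\<forall>\<epsilon>>0. \<exists>\<delta>>0. \<forall>y'\<in>D. norm (y' - z) < \<delta> \<longrightarrow> inner l (y' - z) \<le> \<epsilon> * norm (y' - z)"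
    using l by (simp add: rnormal_def z_def)
  have dd: "\<forall>e>0. \<exists>d>0. \<forall>y\<in>UNIV. norm(y - x) < d \<longrightarrow> norm (g y - g x - G (y - x)) \<le> e * norm (y - x)"
    using deriv unfolding G_def has_derivative_within_alt by blast
  have "\<exists>\<delta>>0. \<forall>p'\<in>gph \<Phi>. norm (p' - (x,y)) < \<delta> \<longrightarrow>
          inner (adjoint G l, -l) (p' - (x,y)) \<le> \<epsilon> * norm (p' - (x,y))" if e: "\<epsilon> > 0" for \<epsilon>
  proof -
    define \<epsilon>0 where "\<epsilon>0 = \<epsilon> / (2*(B+2))"
    define \<epsilon>1 where "\<epsilon>1 = min 1 (\<epsilon> / (2*(norm l+1)))"
    have e0: "\<epsilon>0 > 0" using e B0 by (simp add: \<epsilon>0_def)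
    have e1: "\<epsilon>1 > 0" "\<epsilon>1 \<le> 1" using e by (auto simp: \<epsilon>1_def) (smt (verit) norm_ge_zero divide_pos_pos)
    obtain \<delta>0 where d0: "\<delta>0 > 0" "\<forall>y'\<in>D. norm (y' - z) < \<delta>0 \<longrightarrow> inner l (y' - z) \<le> \<epsilon>0 * norm (y' - z)"
      using lz e0 by blast
    obtain \<delta>1 where d1: "\<delta>1 > 0" "\<forall>y. norm(y - x) < \<delta>1 \<longrightarrow> norm (g y - g x - G (y - x)) \<le> \<epsilon>1 * norm (y - x)"
      using dd e1 by blast
    define \<delta> where "\<delta> = min \<delta>1 (\<delta>0/(B+2))"
    have dpos: "\<delta> > 0" using d0 d1 B0 by (simp add: \<delta>_def)
    show ?thesis
    proof (intro exI[of _ \<delta>] conjI ballI impI dpos)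
      fix p' assume p': "p' \<in> gph \<Phi>" and np: "norm (p' - (x, y)) < \<delta>"
      obtain x' y' where pp: "p' = (x', y')" by (cases p')
      define N where "N = norm (p' - (x, y))"
      define hx where "hx = x' - x"
      define hy where "hy = y' - y"
      have pd: "p' - (x,y) = (hx, hy)" by (simp add: pp hx_def hy_def)
      have nhx: "norm hx \<le> N" unfolding N_def pd by (rule norm_fst_le)
      have nhy: "norm hy \<le> N" unfolding N_def pd by (rule norm_snd_le)
      define z' where "z' = g x' - y'"
      have z'D: "z' \<in> D" using p' pp by (auto simp: gph_def Phi_def z'_def diff_diff_eq2)
      define r where "r = g x' - g x - G hx"
      have "norm hx < \<delta>1" using nhx np \<delta>_def N_def by simp
      then have nr: "norm r \<le> \<epsilon>1 * norm hx" using d1 by (simp add: r_def hx_def)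
      have zz: "z' - z = G hx + r - hy" by (simp add: z'_def z_def r_def hy_def)
      have nG: "norm (G hx) \<le> B * norm hx" unfolding G_def B_def by (rule norm_blinfun)
      have t1: "norm (G hx + r - hy) \<le> norm (G hx + r) + norm hy" by (rule norm_triangle_ineq4)
      have t2: "norm (G hx + r) \<le> norm (G hx) + norm r" by (rule norm_triangle_ineq)
      have t3: "B * norm hx \<le> B * N" using nhx B0 by (rule mult_left_mono)
      have t4: "\<epsilon>1 * norm hx \<le> 1 * N" using nhx e1 by (intro mult_mono) auto
      have "norm (z' - z) \<le> B * N + 1 * N + N" unfolding zz using t1 t2 t3 t4 nG nr nhy by linarith
      then have nz: "norm (z' - z) \<le> (B+2) * N" by (simp add: algebra_simps)
      have "N < \<delta>0/(B+2)" using np \<delta>_def N_def by simp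
      then have "(B+2) * N < \<delta>0" using B0 by (simp add: field_simps)
      then have "inner l (z' - z) \<le> \<epsilon>0 * norm (z' - z)" using d0 z'D nz by simp
      also have "\<dots> \<le> \<epsilon>0 * ((B+2) * N)" using nz e0 by (simp add: mult_left_mono)
      also have "\<dots> = \<epsilon>/2 * N" using B0 by (simp add: \<epsilon>0_def field_simps)
      finally have i1: "inner l (z' - z) \<le> \<epsilon>/2 * N" .
      have "- inner l r \<le> norm l * norm r" using Cauchy_Schwarz_ineq2[of l r] by (smt (verit) norm_cauchy_schwarz inner_minus_right norm_minus_cancel)
      also have "\<dots> \<le> norm l * (\<epsilon>1 * N)" using nr nhx e1
        by (meson mult_left_mono norm_ge_zero order_trans mult_left_mono less_imp_le)
      also have "\<dots> \<le> \<epsilon>/2 * N"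
      proof -
        have "norm l * \<epsilon>1 \<le> \<epsilon>/2"
        proof -
          have nl: "norm l + 1 > 0" by (smt (verit) norm_ge_zero)
          have q: "norm l / (norm l + 1) \<le> 1" using nl by (simp add: divide_le_eq)
          have q2: "(\<epsilon>/2) * (norm l / (norm l + 1)) \<le> (\<epsilon>/2) * 1" using e q by (intro mult_left_mono) auto
          have "\<epsilon>1 \<le> \<epsilon> / (2*(norm l+1))" by (simp add: \<epsilon>1_def)
          then have "norm l * \<epsilon>1 \<le> norm l * (\<epsilon> / (2*(norm l+1)))" by (rule mult_left_mono) simp
          also have "\<dots> = (\<epsilon>/2) * (norm l / (norm l + 1))" by (simp add: field_simps)
          also have "\<dots> \<le> \<epsilon>/2" using q2 by simp
          finally show ?thesis .
        qed
        then have "(norm l * \<epsilon>1) * N \<le> (\<epsilon>/2) * N" by (rule mult_right_mono) (simp add: N_def)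
        then show ?thesis by (simp add: mult.assoc)
      qed
      finally have i2: "- inner l r \<le> \<epsilon>/2 * N" .
      have "inner (adjoint G l, -l) (p' - (x,y)) = inner hx (adjoint G l) - inner l hy"
        unfolding pd by (simp add: inner_commute)
      also have "\<dots> = inner l (z' - z) - inner l r"
        unfolding adjoint_works[OF lin] zz by (simp add: inner_commute inner_diff_right inner_add_right)
      finally show "inner (adjoint G l, -l) (p' - (x,y)) \<le> \<epsilon> * norm (p' - (x,y))"
        using i1 i2 N_def by simp
    qed
  qed
  moreover have "(x,y) \<in> gph \<Phi>" using zD z_def unfolding gph_def Phi_def by (auto intro!: image_eqI[where x="g x - y"])
  ultimately show ?thesis unfolding rnormal_def G_def by simp
qed


lemma rnormal_gph_fwd1:
  fixes g :: "'a::euclidean_space \<Rightarrow> 'b::euclidean_space"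
  assumes Phi_def: "\<And>x. \<Phi> x = (\<lambda>d. g x - d) ` D"
   and h: "(\<eta>, -l) \<in> rnormal (gph \<Phi>) (x,y)"
  shows "l \<in> rnormal D (g x - y)"
proof -
  define z where "z = g x - y"
  have "(x,y) \<in> gph \<Phi>" using h by (simp add: rnormal_def)
  then have zD: "z \<in> D" by (auto simp: gph_def Phi_def z_def diff_diff_eq2)
  have hh: "\<forall>\<epsilon>>0. \<exists>\<delta>>0. \<forall>p'\<in>gph \<Phi>. norm (p' - (x,y)) < \<delta> \<longrightarrow> inner (\<eta>, -l) (p' - (x,y)) \<le> \<epsilon> * norm (p' - (x,y))"
    using h by (simp add: rnormal_def)
  have "\<exists>\<delta>>0. \<forall>z'\<in>D. norm (z' - z) < \<delta> \<longrightarrow> inner l (z' - z) \<le> \<epsilon> * norm (z' - z)" if e: "\<epsilon> > 0" for \<epsilon>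
  proof -
    obtain \<delta> where d: "\<delta> > 0" "\<forall>p'\<in>gph \<Phi>. norm (p' - (x,y)) < \<delta> \<longrightarrow> inner (\<eta>, -l) (p' - (x,y)) \<le> \<epsilon> * norm (p' - (x,y))"
      using hh e by blast
    show ?thesis
    proof (intro exI[of _ \<delta>] conjI ballI impI d(1))
      fix z' assume z': "z' \<in> D" and nz: "norm (z' - z) < \<delta>"
      have pin: "(x, g x - z') \<in> gph \<Phi>" using z' unfolding gph_def Phi_def by auto
      have pd: "(x, g x - z') - (x,y) = (0, -(z' - z))" by (simp add: z_def)
      have nn: "norm ((x, g x - z') - (x,y)) = norm (z' - z)" unfolding pd by (simp add: norm_minus_commute)
      have "norm ((x, g x - z') - (x,y)) < \<delta>" using nz by (simp only: nn)
      have "inner (\<eta>, -l) ((x, g x - z') - (x,y)) \<le> \<epsilon> * norm ((x, g x - z') - (x,y))"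
        using d(2) pin \<open>norm ((x, g x - z') - (x,y)) < \<delta>\<close> by blast
      then show "inner l (z' - z) \<le> \<epsilon> * norm (z' - z)" unfolding nn pd by (simp add: norm_minus_commute inner_diff_right)
    qed
  qed
  then show ?thesis using zD by (simp add: rnormal_def z_def)
qed

lemma rnormal_gph_fwd2:
  fixes g :: "'a::euclidean_space \<Rightarrow> 'b::euclidean_space"
  assumes deriv: "(g has_derivative blinfun_apply (g' x)) (at x)"
   and Phi_def: "\<And>x. \<Phi> x = (\<lambda>d. g x - d) ` D"
   and hyp: "(\<eta>, -l) \<in> rnormal (gph \<Phi>) (x,y)"
  shows "inner \<eta> h \<le> inner l (blinfun_apply (g' x) h)"
proof (rule ccontr)
  define G where "G = blinfun_apply (g' x)"
  define B where "B = norm (g' x)"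
  define z where "z = g x - y"
  define c where "c = inner \<eta> h - inner l (G h)"
  assume "\<not> ?thesis"
  then have cpos: "c > 0" by (simp add: c_def G_def)
  have B0: "B \<ge> 0" by (simp add: B_def)
  have bl: "bounded_linear G" unfolding G_def by (simp add: blinfun.bounded_linear_right)
  have "h \<noteq> 0" using cpos bl by (auto simp: c_def linear_simps)
  define nh where "nh = norm h"
  have nhp: "nh > 0" using \<open>h \<noteq> 0\<close> by (simp add: nh_def)
  have "(x,y) \<in> gph \<Phi>" using hyp by (simp add: rnormal_def)
  then have zD: "z \<in> D" by (auto simp: gph_def Phi_def z_def diff_diff_eq2)
  have hh: "\<forall>\<epsilon>>0. \<exists>\<delta>>0. \<forall>p'\<in>gph \<Phi>. norm (p' - (x,y)) < \<delta> \<longrightarrow> inner (\<eta>, -l) (p' - (x,y)) \<le> \<epsilon> * norm (p' - (x,y))"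
    using hyp by (simp add: rnormal_def)
  have dd: "\<forall>e>0. \<exists>d>0. \<forall>y\<in>UNIV. norm(y - x) < d \<longrightarrow> norm (g y - g x - G (y - x)) \<le> e * norm (y - x)"
    using deriv unfolding G_def has_derivative_within_alt by blast
  define K where "K = (2+B)*nh + 1"
  have Kp: "K > 0" using B0 nhp by (simp add: K_def add_nonneg_pos)
  define \<epsilon> where "\<epsilon> = c / (2*K)"
  define L where "L = norm l * nh + 1"
  have Lp: "L > 0" using nhp by (simp add: L_def add_nonneg_pos)
  define \<epsilon>1 where "\<epsilon>1 = min 1 (c / (2*L))"
  have e: "\<epsilon> > 0" using cpos Kp by (simp add: \<epsilon>_def)
  have e1: "\<epsilon>1 > 0" "\<epsilon>1 \<le> 1" "\<epsilon>1 \<le> c/(2*L)" using cpos Lp by (auto simp: \<epsilon>1_def)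
  obtain \<delta> where d: "\<delta> > 0" "\<forall>p'\<in>gph \<Phi>. norm (p' - (x,y)) < \<delta> \<longrightarrow> inner (\<eta>, -l) (p' - (x,y)) \<le> \<epsilon> * norm (p' - (x,y))"
    using hh e by blast
  obtain \<delta>1 where d1: "\<delta>1 > 0" "\<forall>y. norm(y - x) < \<delta>1 \<longrightarrow> norm (g y - g x - G (y - x)) \<le> \<epsilon>1 * norm (y - x)"
    using dd e1 by blast
  define s where "s = min (\<delta>1/(2*nh)) (\<delta>/(2*K))"
  have sp: "s > 0" using d d1 nhp Kp by (simp add: s_def)
  have ns: "norm (s *\<^sub>R h) = s * nh" using sp by (simp add: nh_def)
  have "s * nh \<le> \<delta>1/(2*nh) * nh" using nhp by (intro mult_right_mono) (auto simp: s_def)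
  also have "\<dots> < \<delta>1" using nhp d1 by (simp add: field_simps)
  finally have sd1: "norm ((x + s *\<^sub>R h) - x) < \<delta>1" using ns by simp
  define r where "r = g (x + s *\<^sub>R h) - g x - G (s *\<^sub>R h)"
  have "norm (g (x + s *\<^sub>R h) - g x - G ((x + s *\<^sub>R h) - x)) \<le> \<epsilon>1 * norm ((x + s *\<^sub>R h) - x)"
    using d1(2) sd1 by blast
  then have nr: "norm r \<le> \<epsilon>1 * (s * nh)" using ns by (simp add: r_def)
  define p' where "p' = (x + s *\<^sub>R h, g (x + s *\<^sub>R h) - z)"
  have pin: "p' \<in> gph \<Phi>" using zD unfolding p'_def gph_def Phi_def by auto
  have pd: "p' - (x,y) = (s *\<^sub>R h, G (s *\<^sub>R h) + r)" by (simp add: p'_def z_def r_def)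
  have nG: "norm (G (s *\<^sub>R h)) \<le> B * (s * nh)" unfolding G_def B_def ns[symmetric] by (rule norm_blinfun)
  have "norm (p' - (x,y)) \<le> norm (s *\<^sub>R h) + norm (G (s *\<^sub>R h) + r)" unfolding pd by (rule norm_Pair_le)
  also have "\<dots> \<le> s * nh + (B * (s * nh) + \<epsilon>1 * (s * nh))"
    using ns nG nr norm_triangle_ineq[of "G (s *\<^sub>R h)" r] by linarith
  also have "\<dots> \<le> s * nh + (B * (s * nh) + 1 * (s * nh))"
    using e1 sp nhp by (intro add_left_mono add_mono mult_right_mono) auto
  also have "\<dots> = s * ((2+B)*nh)" by (simp add: algebra_simps)
  finally have nN: "norm (p' - (x,y)) \<le> s * ((2+B)*nh)" .
  have "s * ((2+B)*nh) < s * K" using sp by (simp add: K_def)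
  also have "s * K \<le> \<delta>/(2*K) * K" using Kp by (intro mult_right_mono) (auto simp: s_def)
  also have "\<dots> < \<delta>" using Kp d by (simp add: field_simps)
  finally have "norm (p' - (x,y)) < \<delta>" using nN by simp
  then have up: "inner (\<eta>, -l) (p' - (x,y)) \<le> \<epsilon> * norm (p' - (x,y))" using d pin by blast
  have "\<epsilon> * norm (p' - (x,y)) < \<epsilon> * (s * K)"
    using e nN \<open>s * ((2+B)*nh) < s * K\<close> by (intro mult_strict_left_mono) auto
  also have "\<dots> = s * c / 2" using Kp by (simp add: \<epsilon>_def field_simps)
  finally have up2: "inner (\<eta>, -l) (p' - (x,y)) < s * c / 2" using up by linarith
  have lin: "inner (\<eta>, -l) (p' - (x,y)) = s * c - inner l r"
    unfolding pd c_def using bl by (simp add: linear_simps inner_add_right algebra_simps)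
  have "inner l r \<le> norm l * norm r" by (rule norm_cauchy_schwarz)
  also have "\<dots> \<le> norm l * (\<epsilon>1 * (s * nh))" using nr by (simp add: mult_left_mono)
  also have "\<dots> = s * (\<epsilon>1 * (norm l * nh))" by (simp add: algebra_simps)
  also have "\<dots> \<le> s * (c/(2*L) * L)"
  proof -
    have "\<epsilon>1 * (norm l * nh) \<le> c/(2*L) * (norm l * nh)" using e1 nhp by (intro mult_right_mono) auto
    also have "\<dots> \<le> c/(2*L) * L" using cpos Lp by (intro mult_left_mono) (auto simp: L_def)
    finally show ?thesis using sp by (simp add: mult_left_mono)
  qed
  also have "\<dots> = s * c / 2" using Lp by simp
  finally have "inner l r \<le> s * c / 2" .
  then have "s * c < s * c / 2 + s * c / 2" using lin up2 by linarith
  then show False using sp cpos by (simp add: field_simps)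
qed


lemma rnormal_gph:
  fixes g :: "'a::euclidean_space \<Rightarrow> 'b::euclidean_space"
  assumes deriv: "(g has_derivative blinfun_apply (g' x)) (at x)"
   and Phi_def: "\<And>x. \<Phi> x = (\<lambda>d. g x - d) ` D"
  shows "(\<eta>, -l) \<in> rnormal (gph \<Phi>) (x,y) \<longleftrightarrow> l \<in> rnormal D (g x - y) \<and> \<eta> = adjoint (blinfun_apply (g' x)) l"
proof
  assume h: "(\<eta>, -l) \<in> rnormal (gph \<Phi>) (x,y)"
  define G where "G = blinfun_apply (g' x)"
  have lin: "linear G" unfolding G_def by (simp add: blinfun.bounded_linear_right bounded_linear.linear)
  have ln: "l \<in> rnormal D (g x - y)" by (rule rnormal_gph_fwd1[where g=g and \<Phi>=\<Phi> and D=D, OF Phi_def h])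
  have eq: "inner \<eta> v = inner l (G v)" for v
  proof -
    have "inner \<eta> v \<le> inner l (G v)" using rnormal_gph_fwd2[where g=g and g'=g' and x=x and \<Phi>=\<Phi> and D=D, OF deriv Phi_def h] by (simp add: G_def)
    moreover have "inner \<eta> (-v) \<le> inner l (G (-v))" using rnormal_gph_fwd2[where g=g and g'=g' and x=x and \<Phi>=\<Phi> and D=D and h="-v", OF deriv Phi_def h] by (simp only: G_def)
    moreover have "G (-v) = - G v" by (rule linear_neg[OF lin])
    ultimately show ?thesis by simp
  qed
  have "inner (\<eta> - adjoint G l) v = 0" for v
    using eq[of v] adjoint_works[OF lin, of v l] by (simp add: inner_diff_left inner_diff_right inner_commute)
  then have "\<eta> - adjoint G l = 0" using inner_eq_zero_iff by blast
  then show "l \<in> rnormal D (g x - y) \<and> \<eta> = adjoint (blinfun_apply (g' x)) l" using ln by (simp add: G_def)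
next
  assume "l \<in> rnormal D (g x - y) \<and> \<eta> = adjoint (blinfun_apply (g' x)) l"
  then show "(\<eta>, -l) \<in> rnormal (gph \<Phi>) (x,y)" using rnormal_gph_bwd[where g=g and g'=g' and \<Phi>=\<Phi> and D=D, OF deriv Phi_def] by blast
qed

lemma seq_quot:
  fixes g :: "'a::real_normed_vector \<Rightarrow> 'b::real_normed_vector"
  assumes d: "(g has_derivative G) (at xb)" and ne: "\<And>k. xs k \<noteq> xb" and xs: "xs \<longlonglongrightarrow> xb"
    and us: "(\<lambda>k. (1 / norm (xs k - xb)) *\<^sub>R (xs k - xb)) \<longlonglongrightarrow> u"
  shows "(\<lambda>k. (1 / norm (xs k - xb)) *\<^sub>R (g (xs k) - g xb)) \<longlonglongrightarrow> G u"
proof -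
  define t where "t k = norm (xs k - xb)" for k
  have tp: "t k > 0" for k using ne[of k] by (simp add: t_def)
  have "(\<lambda>k. xs k - xb) \<longlonglongrightarrow> 0" using tendsto_diff[OF xs tendsto_const[of xb]] by simp
  then have t0: "t \<longlonglongrightarrow> 0" unfolding t_def using tendsto_norm_zero by blast
  have "(\<lambda>k. (1 / t k) *\<^sub>R (g (xb + t k *\<^sub>R ((1 / t k) *\<^sub>R (xs k - xb))) - g xb)) \<longlonglongrightarrow> G u"
    by (rule dir_quot[OF d t0 tp]) (use us in \<open>simp add: t_def\<close>)
  moreover have "xb + t k *\<^sub>R ((1 / t k) *\<^sub>R (xs k - xb)) = xs k" for k
    using tp[of k] by simp
  ultimately show ?thesis by (simp add: t_def)
qed

lemma dl_equiv:
  fixes g :: "'a::euclidean_space \<Rightarrow> 'b::euclidean_space"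
  assumes deriv: "\<And>x. (g has_derivative blinfun_apply (g' x)) (at x)"
    and cont: "continuous_on UNIV g'"
    and Phi_def: "\<And>x. \<Phi> x = (\<lambda>d. g x - d) ` D"
  shows "0 \<in> dlcoderiv \<Phi> xb 0 u 0 lam \<longleftrightarrow>
      lam \<in> dlnormal D (g xb) (g' xb u) \<and> adjoint (blinfun_apply (g' xb)) lam = 0"
proof
  assume "0 \<in> dlcoderiv \<Phi> xb 0 u 0 lam"
  then obtain t vs \<eta>s where tp: "\<forall>k. t k > 0" and t0: "t \<longlonglongrightarrow> 0" and vs: "vs \<longlonglongrightarrow> (u, 0)"
     and es: "\<eta>s \<longlonglongrightarrow> (0, -lam)" and rn: "\<forall>k. \<eta>s k \<in> rnormal (gph \<Phi>) ((xb, 0) + t k *\<^sub>R vs k)"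
    unfolding dlcoderiv_def dlnormal_def by blast
  define a where "a = (\<lambda>k. fst (vs k))"
  define b where "b = (\<lambda>k. snd (vs k))"
  define c where "c = (\<lambda>k. fst (\<eta>s k))"
  define d where "d = (\<lambda>k. - snd (\<eta>s k))"
  have a: "a \<longlonglongrightarrow> u" using tendsto_fst[OF vs] by (simp add: a_def)
  have b: "b \<longlonglongrightarrow> 0" using tendsto_snd[OF vs] by (simp add: b_def)
  have c: "c \<longlonglongrightarrow> 0" using tendsto_fst[OF es] by (simp add: c_def)
  have d: "d \<longlonglongrightarrow> lam" using tendsto_minus[OF tendsto_snd[OF es]] by (simp add: d_def)
  have rn2: "(c k, - d k) \<in> rnormal (gph \<Phi>) (xb + t k *\<^sub>R a k, t k *\<^sub>R b k)" for k
  proof -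
    have "(xb, 0) + t k *\<^sub>R vs k = (xb + t k *\<^sub>R a k, t k *\<^sub>R b k)" by (simp add: a_def b_def prod_eq_iff)
    moreover have "\<eta>s k = (c k, - d k)" by (simp add: c_def d_def)
    ultimately show ?thesis using rn[rule_format, of k] by simp
  qed
  have dk: "d k \<in> rnormal D (g (xb + t k *\<^sub>R a k) - t k *\<^sub>R b k)"
    and ck: "c k = adjoint (blinfun_apply (g' (xb + t k *\<^sub>R a k))) (d k)" for k
    using rnormal_gph[where g=g and g'=g' and \<Phi>=\<Phi> and D=D, OF deriv Phi_def] rn2[of k] by blast+
  define ws where "ws = (\<lambda>k. (1 / t k) *\<^sub>R (g (xb + t k *\<^sub>R a k) - g xb) - b k)"
  have ws: "ws \<longlonglongrightarrow> g' xb u - 0"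
    unfolding ws_def by (intro tendsto_diff dir_quot[OF deriv t0] b a) (use tp in auto)
  have pt: "g xb + t k *\<^sub>R ws k = g (xb + t k *\<^sub>R a k) - t k *\<^sub>R b k" for k
    using tp[rule_format, of k] by (simp add: ws_def scaleR_diff_right)
  have "lam \<in> dlnormal D (g xb) (g' xb u)"
    unfolding dlnormal_def using tp t0 ws d dk pt by (intro CollectI exI[of _ t] exI[of _ ws] exI[of _ d]) auto
  moreover have "c \<longlonglongrightarrow> adjoint (blinfun_apply (g' xb)) lam"
  proof -
    have "(\<lambda>k. xb + t k *\<^sub>R a k) \<longlonglongrightarrow> xb + 0 *\<^sub>R u" by (intro tendsto_intros t0 a)
    then have "(\<lambda>k. adjoint (blinfun_apply (g' (xb + t k *\<^sub>R a k))) (d k)) \<longlonglongrightarrow> adjoint (blinfun_apply (g' xb)) lam"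
      using adjoint_tendsto[OF cont _ d] by simp
    moreover have "c = (\<lambda>k. adjoint (blinfun_apply (g' (xb + t k *\<^sub>R a k))) (d k))" by (rule ext) (rule ck)
    ultimately show ?thesis by simp
  qed
  then have "adjoint (blinfun_apply (g' xb)) lam = 0" using c LIMSEQ_unique by blast
  ultimately show "lam \<in> dlnormal D (g xb) (g' xb u) \<and> adjoint (blinfun_apply (g' xb)) lam = 0" by blast
next
  assume "lam \<in> dlnormal D (g xb) (g' xb u) \<and> adjoint (blinfun_apply (g' xb)) lam = 0"
  then obtain t ws ls where tp: "\<forall>k. t k > 0" and t0: "t \<longlonglongrightarrow> 0" and ws: "ws \<longlonglongrightarrow> g' xb u"
     and ls: "ls \<longlonglongrightarrow> lam" and rn: "\<forall>k. ls k \<in> rnormal D (g xb + t k *\<^sub>R ws k)"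
     and adj: "adjoint (blinfun_apply (g' xb)) lam = 0"
    unfolding dlnormal_def by blast
  define vs where "vs = (\<lambda>k. (u, (1 / t k) *\<^sub>R (g (xb + t k *\<^sub>R u) - g xb) - ws k))"
  define \<eta>s where "\<eta>s = (\<lambda>k. (adjoint (blinfun_apply (g' (xb + t k *\<^sub>R u))) (ls k), - ls k))"
  have "(\<lambda>k. (1 / t k) *\<^sub>R (g (xb + t k *\<^sub>R u) - g xb) - ws k) \<longlonglongrightarrow> g' xb u - g' xb u"
    by (intro tendsto_diff dir_quot[OF deriv t0] ws) (use tp in auto)
  then have vs: "vs \<longlonglongrightarrow> (u, 0)" unfolding vs_def by (intro tendsto_Pair) auto
  have "(\<lambda>k. xb + t k *\<^sub>R u) \<longlonglongrightarrow> xb + 0 *\<^sub>R u" by (intro tendsto_intros t0)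
  then have "(\<lambda>k. adjoint (blinfun_apply (g' (xb + t k *\<^sub>R u))) (ls k)) \<longlonglongrightarrow> adjoint (blinfun_apply (g' xb)) lam"
    using adjoint_tendsto[OF cont _ ls] by simp
  then have es: "\<eta>s \<longlonglongrightarrow> (0, -lam)" unfolding \<eta>s_def using adj by (intro tendsto_Pair tendsto_minus ls) auto
  have rn2: "\<eta>s k \<in> rnormal (gph \<Phi>) ((xb, 0) + t k *\<^sub>R vs k)" for k
  proof -
    have eqp: "(xb, 0) + t k *\<^sub>R vs k = (xb + t k *\<^sub>R u, g (xb + t k *\<^sub>R u) - g xb - t k *\<^sub>R ws k)"
      using tp[rule_format, of k] by (simp add: vs_def scaleR_diff_right)
    have "g (xb + t k *\<^sub>R u) - (g (xb + t k *\<^sub>R u) - g xb - t k *\<^sub>R ws k) = g xb + t k *\<^sub>R ws k" by simp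
    then show ?thesis unfolding eqp \<eta>s_def using rnormal_gph[where g=g and g'=g' and \<Phi>=\<Phi> and D=D, OF deriv Phi_def] rn by (simp add: add.commute)
  qed
  show "0 \<in> dlcoderiv \<Phi> xb 0 u 0 lam"
    unfolding dlcoderiv_def dlnormal_def using tp t0 vs es rn2
    by (intro CollectI exI[of _ t] exI[of _ vs] exI[of _ \<eta>s]) auto
qed


theorem mainTheorem6:
  fixes g :: "'a::euclidean_space \<Rightarrow> 'b::euclidean_space"
    and g' :: "'a \<Rightarrow> 'a \<Rightarrow>\<^sub>L 'b"
    and D :: "'b set" and \<Phi> :: "'a \<Rightarrow> 'b set"
    and xb u :: 'a and e :: "nat \<Rightarrow> 'b" and m :: nat
  assumes deriv: "\<And>x. (g has_derivative blinfun_apply (g' x)) (at x)"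
    and cont: "continuous_on UNIV g'"
    and closedD: "closed D"
    and Phi_def: "\<And>x. \<Phi> x = (\<lambda>d. g x - d) ` D"
    and in_gph: "(xb, 0) \<in> gph \<Phi>"
    and unit: "norm u = 1"
    and m_dim: "m = DIM('b)"
    and orthonormal: "\<And>i j. i < m \<Longrightarrow> j < m \<Longrightarrow> inner (e i) (e j) = (if i = j then 1 else 0)"
  shows "quasi_normal_dir \<Phi> xb 0 u e m \<longleftrightarrow>
    \<not> (\<exists>lam. lam \<noteq> 0 \<and> lam \<in> dlnormal D (g xb) (g' xb u) \<and>
          adjoint (blinfun_apply (g' xb)) lam = 0 \<and>
          (\<exists>xs zs lams.
             (\<forall>k. xs k \<noteq> xb \<and> zs k \<in> D) \<and>
             xs \<longlonglongrightarrow> xb \<and> zs \<longlonglongrightarrow> g xb \<and> lams \<longlonglongrightarrow> lam \<and>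
             (\<lambda>k. (1 / norm (xs k - xb)) *\<^sub>R (xs k - xb)) \<longlonglongrightarrow> u \<and>
             (\<lambda>k. (1 / norm (xs k - xb)) *\<^sub>R (zs k - g xb)) \<longlonglongrightarrow> g' xb u \<and>
             (\<forall>k. lams k \<in> rnormal D (zs k)) \<and>
             (\<forall>k. \<forall>i<m. inner lam (e i) \<noteq> 0 \<longrightarrow> inner lam (e i) * inner (g (xs k) - zs k) (e i) > 0)))"
proof -
  have Phi_eq: "\<Phi> = (\<lambda>x. (\<lambda>d. g x - d) ` D)" using Phi_def by (rule ext)
  have gcont: "isCont g x" for x using deriv[of x] has_derivative_continuous by blast
  have gxbD: "g xb \<in> D" using in_gph by (auto simp: gph_def Phi_def)
  have key: "(lam \<noteq> 0 \<and> 0 \<in> dlcoderiv \<Phi> xb 0 u 0 lam \<and>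
        (\<exists>xs ys lams \<eta>s.
           (\<forall>k. (xs k, ys k) \<in> gph \<Phi> \<and> xs k \<noteq> xb) \<and>
           xs \<longlonglongrightarrow> xb \<and> ys \<longlonglongrightarrow> 0 \<and> lams \<longlonglongrightarrow> lam \<and> \<eta>s \<longlonglongrightarrow> 0 \<and>
           (\<lambda>k. (1 / norm (xs k - xb)) *\<^sub>R (xs k - xb)) \<longlonglongrightarrow> u \<and>
           (\<lambda>k. (1 / norm (xs k - xb)) *\<^sub>R (ys k - 0)) \<longlonglongrightarrow> 0 \<and>
           (\<forall>k. \<eta>s k \<in> rcoderiv \<Phi> (xs k) (ys k) (lams k)) \<and>
           (\<forall>k. \<forall>i<m. inner lam (e i) \<noteq> 0 \<longrightarrow> inner lam (e i) * inner (ys k - 0) (e i) > 0)))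
    \<longleftrightarrow> (lam \<noteq> 0 \<and> lam \<in> dlnormal D (g xb) (g' xb u) \<and>
          adjoint (blinfun_apply (g' xb)) lam = 0 \<and>
          (\<exists>xs zs lams.
             (\<forall>k. xs k \<noteq> xb \<and> zs k \<in> D) \<and>
             xs \<longlonglongrightarrow> xb \<and> zs \<longlonglongrightarrow> g xb \<and> lams \<longlonglongrightarrow> lam \<and>
             (\<lambda>k. (1 / norm (xs k - xb)) *\<^sub>R (xs k - xb)) \<longlonglongrightarrow> u \<and>
             (\<lambda>k. (1 / norm (xs k - xb)) *\<^sub>R (zs k - g xb)) \<longlonglongrightarrow> g' xb u \<and>
             (\<forall>k. lams k \<in> rnormal D (zs k)) \<and>
             (\<forall>k. \<forall>i<m. inner lam (e i) \<noteq> 0 \<longrightarrow> inner lam (e i) * inner (g (xs k) - zs k) (e i) > 0)))"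
    (is "?L \<longleftrightarrow> ?R") for lam
  proof
    assume L: ?L
    then have dl: "lam \<in> dlnormal D (g xb) (g' xb u) \<and> adjoint (blinfun_apply (g' xb)) lam = 0"
      using dl_equiv[where g=g and g'=g' and \<Phi>=\<Phi> and D=D, OF deriv cont Phi_def] by blast
    from L obtain xs ys lams \<eta>s where
      gp: "\<forall>k. (xs k, ys k) \<in> gph \<Phi> \<and> xs k \<noteq> xb" and xs: "xs \<longlonglongrightarrow> xb" and ys: "ys \<longlonglongrightarrow> 0"
      and lams: "lams \<longlonglongrightarrow> lam" and us: "(\<lambda>k. (1 / norm (xs k - xb)) *\<^sub>R (xs k - xb)) \<longlonglongrightarrow> u"
      and yq: "(\<lambda>k. (1 / norm (xs k - xb)) *\<^sub>R (ys k - 0)) \<longlonglongrightarrow> 0"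
      and rc: "\<forall>k. \<eta>s k \<in> rcoderiv \<Phi> (xs k) (ys k) (lams k)"
      and sg: "\<forall>k. \<forall>i<m. inner lam (e i) \<noteq> 0 \<longrightarrow> inner lam (e i) * inner (ys k - 0) (e i) > 0"
      by blast
    define zs where "zs = (\<lambda>k. g (xs k) - ys k)"
    have rnD: "lams k \<in> rnormal D (zs k)" for k
      using rc[rule_format, of k] rnormal_gph[where g=g and g'=g' and \<Phi>=\<Phi> and D=D, OF deriv Phi_def]
      by (simp add: rcoderiv_def zs_def)
    have zD: "zs k \<in> D" for k using rnD[of k] by (simp add: rnormal_def)
    have gx: "(\<lambda>k. g (xs k)) \<longlonglongrightarrow> g xb" using gcont xs isCont_tendsto_compose by blast
    have zs: "zs \<longlonglongrightarrow> g xb - 0" unfolding zs_def by (intro tendsto_diff gx ys)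
    have q1: "(\<lambda>k. (1 / norm (xs k - xb)) *\<^sub>R (g (xs k) - g xb)) \<longlonglongrightarrow> g' xb u"
      using seq_quot[OF deriv[of xb] _ xs us] gp by blast
    have "(\<lambda>k. (1 / norm (xs k - xb)) *\<^sub>R (g (xs k) - g xb) - (1 / norm (xs k - xb)) *\<^sub>R (ys k - 0)) \<longlonglongrightarrow> g' xb u - 0"
      by (intro tendsto_diff q1 yq)
    moreover have "(1 / norm (xs k - xb)) *\<^sub>R (g (xs k) - g xb) - (1 / norm (xs k - xb)) *\<^sub>R (ys k - 0)
        = (1 / norm (xs k - xb)) *\<^sub>R (zs k - g xb)" for k
      by (simp add: zs_def scaleR_diff_right algebra_simps)
    ultimately have zq: "(\<lambda>k. (1 / norm (xs k - xb)) *\<^sub>R (zs k - g xb)) \<longlonglongrightarrow> g' xb u" by simp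
    have "\<forall>k. \<forall>i<m. inner lam (e i) \<noteq> 0 \<longrightarrow> inner lam (e i) * inner (g (xs k) - zs k) (e i) > 0"
      using sg by (simp add: zs_def)
    have l0: "lam \<noteq> 0" using L by (rule conjunct1)
    then show ?R
      apply (intro conjI)
         apply (rule l0)
        apply (use dl in blast)
       apply (use dl in blast)
      apply (rule exI[of _ xs], rule exI[of _ zs], rule exI[of _ lams])
      using gp xs zs lams us zq rnD zD \<open>\<forall>k. \<forall>i<m. inner lam (e i) \<noteq> 0 \<longrightarrow> inner lam (e i) * inner (g (xs k) - zs k) (e i) > 0\<close> apply simp
      done
  next
    assume R: ?R
    then have dl: "0 \<in> dlcoderiv \<Phi> xb 0 u 0 lam"
      using dl_equiv[where g=g and g'=g' and \<Phi>=\<Phi> and D=D, OF deriv cont Phi_def] by blast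
    have adj: "adjoint (blinfun_apply (g' xb)) lam = 0" using R by (elim conjE)
    from R obtain xs zs lams where
      gp: "\<forall>k. xs k \<noteq> xb \<and> zs k \<in> D" and xs: "xs \<longlonglongrightarrow> xb" and zs: "zs \<longlonglongrightarrow> g xb"
      and lams: "lams \<longlonglongrightarrow> lam" and us: "(\<lambda>k. (1 / norm (xs k - xb)) *\<^sub>R (xs k - xb)) \<longlonglongrightarrow> u"
      and zq: "(\<lambda>k. (1 / norm (xs k - xb)) *\<^sub>R (zs k - g xb)) \<longlonglongrightarrow> g' xb u"
      and rnD: "\<forall>k. lams k \<in> rnormal D (zs k)"
      and sg: "\<forall>k. \<forall>i<m. inner lam (e i) \<noteq> 0 \<longrightarrow> inner lam (e i) * inner (g (xs k) - zs k) (e i) > 0"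
      by blast
    define ys where "ys = (\<lambda>k. g (xs k) - zs k)"
    define \<eta>s where "\<eta>s = (\<lambda>k. adjoint (blinfun_apply (g' (xs k))) (lams k))"
    have gph: "(xs k, ys k) \<in> gph \<Phi>" for k
      using gp unfolding ys_def gph_def Phi_def by (auto intro!: image_eqI[where x="zs k"])
    have gx: "(\<lambda>k. g (xs k)) \<longlonglongrightarrow> g xb" using gcont xs isCont_tendsto_compose by blast
    have ys: "ys \<longlonglongrightarrow> 0" using tendsto_diff[OF gx zs] by (simp add: ys_def)
    have es: "\<eta>s \<longlonglongrightarrow> 0" using adjoint_tendsto[OF cont xs lams] adj by (simp add: \<eta>s_def)
    have q1: "(\<lambda>k. (1 / norm (xs k - xb)) *\<^sub>R (g (xs k) - g xb)) \<longlonglongrightarrow> g' xb u"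
      using seq_quot[OF deriv[of xb] _ xs us] gp by blast
    have "(\<lambda>k. (1 / norm (xs k - xb)) *\<^sub>R (g (xs k) - g xb) - (1 / norm (xs k - xb)) *\<^sub>R (zs k - g xb)) \<longlonglongrightarrow> g' xb u - g' xb u"
      by (intro tendsto_diff q1 zq)
    moreover have "(1 / norm (xs k - xb)) *\<^sub>R (g (xs k) - g xb) - (1 / norm (xs k - xb)) *\<^sub>R (zs k - g xb)
        = (1 / norm (xs k - xb)) *\<^sub>R (ys k - 0)" for k
      by (simp add: ys_def scaleR_diff_right algebra_simps)
    ultimately have yq: "(\<lambda>k. (1 / norm (xs k - xb)) *\<^sub>R (ys k - 0)) \<longlonglongrightarrow> 0" by simp
    have rc: "\<eta>s k \<in> rcoderiv \<Phi> (xs k) (ys k) (lams k)" for k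
      using rnD rnormal_gph[where g=g and g'=g' and \<Phi>=\<Phi> and D=D, OF deriv Phi_def]
      by (simp add: rcoderiv_def ys_def \<eta>s_def)
    have "\<forall>k. \<forall>i<m. inner lam (e i) \<noteq> 0 \<longrightarrow> inner lam (e i) * inner (ys k - 0) (e i) > 0"
      using sg by (simp add: ys_def)
    have l0: "lam \<noteq> 0" using R by (rule conjunct1)
    then show ?L
      apply (intro conjI)
        apply (rule l0)
       apply (rule dl)
      apply (rule exI[of _ xs], rule exI[of _ ys], rule exI[of _ lams], rule exI[of _ \<eta>s])
      using gph gp xs ys lams es us yq rc \<open>\<forall>k. \<forall>i<m. inner lam (e i) \<noteq> 0 \<longrightarrow> inner lam (e i) * inner (ys k - 0) (e i) > 0\<close> apply simp
      done
  qed
  show ?thesis unfolding quasi_normal_dir_def key by (rule refl)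
qed

end
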